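(* Let $F_0$ and $F_1$ be continuous cumulative distribution functions on $\mathbb{R}$, let $\bar F_j = 1-F_j$, and define $D(x)=\bar F_1(\bar F_0^{-1}(x))$ for $x\in[0,1]$ and $\delta(x)=D(x)-x$; assume $D$ is differentiable on $(0,1)$. For $\tau_1\in(0,1]$ and $\tau_2>0$ define \[ E_0=\tau_1(1-\log\tau_1+\log\tau_2),\qquad V_0=\tau_1\bigl(1+(1-\tau_1)(1-\log\tau_1+\log\tau_2)^2\bigr), \] \[ E_1=\int_0^{\tau_1}-\log\!\Big(\frac{u}{\tau_2}\Big)D'(u)\,du,\qquad \Delta=E_1-E_0,\qquad c(\tau_1,\tau_2)=\frac{\Delta^2}{V_0}. \] If $\tau^*\in(0,1)$ is a solution of the equation \[ \int_0^{x}\log(u)\,d\delta(u)=\delta(x)\Big(\log(x)-\frac{2-x}{1-x}\Big), \] then the point $(\tau_1,\tau_2)=(\tau^*,\tau^* )$ satisfies the first-order conditions for maximizing $c$, i.e. $\frac{\partial c}{\partial\tau_1}(\tau^*,\tau^* )=0$ and $\frac{\partial c}{\partial\tau_2}(\tau^*,\tau^* )=0$.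
   Context: Setting: i.i.d. input statistics $X_1,\dots,X_n$ with $H_0: X_i\sim F_0$ versus $H_1: X_i\sim F_1$, input $p$-values $P_i=\bar F_0(X_i)$. The TFisher statistic is $W_n(\tau_1,\tau_2)=\sum_{i=1}^n\bigl(-2\log P_i+2\log\tau_2\bigr)I(P_i\le\tau_1)$. Under $H_0$, $E_0$ and $V_0$ are the mean and variance of $-\log(P_i/\tau_2)I(P_i\le\tau_1)$, and $E_1$ is its mean under $H_1$ (with $D(P_i)$ uniform on $[0,1]$ under $H_1$). The quantity $c(\tau_1,\tau_2)$ is the Bahadur efficiency of $W_n(\tau_1,\tau_2)$. The choice $\tau_1=\tau_2$ is called soft-thresholding. *)

theory Defs
  imports "HOL-Analysis.Analysis"
begin

definition continuous_cdf :: "(real \<Rightarrow> real) \<Rightarrow> bool" where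
  "continuous_cdf F \<longleftrightarrow> mono F \<and> (F \<longlongrightarrow> 0) at_bot \<and> (F \<longlongrightarrow> 1) at_top
      \<and> continuous_on UNIV F"

definition surv :: "(real \<Rightarrow> real) \<Rightarrow> real \<Rightarrow> real" where
  "surv F t = 1 - F t"

definition surv_inv :: "(real \<Rightarrow> real) \<Rightarrow> real \<Rightarrow> real" where
  "surv_inv F x = Inf {t. surv F t \<le> x}"

definition Dfun :: "(real \<Rightarrow> real) \<Rightarrow> (real \<Rightarrow> real) \<Rightarrow> real \<Rightarrow> real" where
  "Dfun F0 F1 x = surv F1 (surv_inv F0 x)"

definition E0 :: "real \<Rightarrow> real \<Rightarrow> real" where
  "E0 t1 t2 = t1 * (1 - ln t1 + ln t2)"

definition V0 :: "real \<Rightarrow> real \<Rightarrow> real" where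
  "V0 t1 t2 = t1 * (1 + (1 - t1) * (1 - ln t1 + ln t2)^2)"

definition E1 :: "(real \<Rightarrow> real) \<Rightarrow> real \<Rightarrow> real \<Rightarrow> real" where
  "E1 D t1 t2 = integral {0..t1} (\<lambda>u. - ln (u / t2) * deriv D u)"

definition Bahadur_c :: "(real \<Rightarrow> real) \<Rightarrow> real \<Rightarrow> real \<Rightarrow> real" where
  "Bahadur_c D t1 t2 = (E1 D t1 t2 - E0 t1 t2)^2 / V0 t1 t2"

end

theory Submission imports Defs "HOL-Real_Asymp.Real_Asymp" begin

lemma cont_Icc0:
  fixes f :: "real \<Rightarrow> real"
  assumes "0 < b" "\<And>x. 0 < x \<Longrightarrow> x \<le> b \<Longrightarrow> isCont f x" "(f \<longlongrightarrow> f 0) (at_right 0)"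
  shows "continuous_on {0..b} f"
proof (rule continuous_on_IccI)
  show "(f \<longlongrightarrow> f b) (at_left b)" using assms(1) assms(2)[of b]
    by (auto simp: isCont_def intro: filterlim_mono[OF _ order_refl at_le])
  show "\<And>x. 0 < x \<Longrightarrow> x < b \<Longrightarrow> f \<midarrow>x\<rightarrow> f x" using assms(2) by (simp add: isCont_def)
qed (use assms in auto)

lemma ln_has_integral:
  fixes t :: real
  assumes "0 < t"
  shows "(ln has_integral (t * ln t - t)) {0..t}"
proof -
  have c: "continuous_on {0..t} (\<lambda>u::real. u * ln u - u)"
  proof (rule cont_Icc0)
    show "((\<lambda>u::real. u * ln u - u) \<longlongrightarrow> 0 * ln 0 - 0) (at_right 0)" by simp real_asymp
  qed (use assms in \<open>auto intro!: continuous_intros\<close>)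
  have "(ln has_integral ((t * ln t - t) - (0 * ln 0 - 0))) {0..t}"
  proof (rule fundamental_theorem_of_calculus_interior[OF _ c])
    fix x assume "x \<in> {0<..<t}"
    then show "((\<lambda>u::real. u * ln u - u) has_vector_derivative ln x) (at x)"
      unfolding has_real_derivative_iff_has_vector_derivative[symmetric]
      by (auto intro!: derivative_eq_intros)
  qed (use assms in auto)
  then show ?thesis by simp
qed


theorem lemma1:
  fixes F0 F1 :: "real \<Rightarrow> real" and \<tau> :: real
  defines "D \<equiv> Dfun F0 F1"
  assumes "continuous_cdf F0" and "continuous_cdf F1"
    and "D differentiable_on {0<..<1}"
    and "(D \<longlongrightarrow> 0) (at_right 0)"
    and "\<forall>x\<in>{0<..<1}. (\<lambda>u. ln u * deriv D u) integrable_on {0..x}"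
    and "\<forall>x\<in>{0<..<1}. deriv D integrable_on {0..x}"
    and "0 < \<tau>" and "\<tau> < 1"
    and "integral {0..\<tau>} (\<lambda>u. ln u * (deriv D u - 1))
           = (D \<tau> - \<tau>) * (ln \<tau> - (2 - \<tau>) / (1 - \<tau>))"
  shows "((\<lambda>t1. Bahadur_c D t1 \<tau>) has_real_derivative 0) (at \<tau>)
       \<and> ((\<lambda>t2. Bahadur_c D \<tau> t2) has_real_derivative 0) (at \<tau>)"
proof -
  note tau = assms(8,9)
  have dD: "(D has_real_derivative deriv D x) (at x)" if "0 < x" "x < 1" for x
  proof -
    have "D differentiable at x"
      using assms(4) that by (simp add: differentiable_on_eq_differentiable_at)
    then show ?thesis by (simp add: DERIV_deriv_iff_real_differentiable)
  qed
  have cD: "isCont D x" if "0 < x" "x < 1" for x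
    using dD[OF that] by (rule DERIV_isCont)
  define Dt where "Dt = (\<lambda>u. if u = 0 then 0 else D u)"
  have FTC: "(deriv D has_integral D t) {0..t}" if "0 < t" "t < 1" for t
  proof -
    have ev: "eventually (\<lambda>u. Dt u = D u) (nhds x)" if "0 < x" for x
    proof -
      have "eventually (\<lambda>u. u \<in> {0<..}) (nhds x)"
        using that by (intro eventually_nhds_in_open) auto
      then show ?thesis by eventually_elim (auto simp: Dt_def)
    qed
    have c: "continuous_on {0..t} Dt"
    proof (rule cont_Icc0)
      show "(Dt \<longlongrightarrow> Dt 0) (at_right 0)"
      proof -
        have "eventually (\<lambda>u. D u = Dt u) (at_right (0::real))"
          by (auto simp: Dt_def eventually_at_filter)
        then show ?thesis using assms(5) by (simp add: Dt_def tendsto_cong)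
      qed
      fix x assume "0 < x" "x \<le> t"
      then show "isCont Dt x" using isCont_cong[OF ev[of x]] cD[of x] that by auto
    qed (use that in auto)
    have "(deriv D has_integral (Dt t - Dt 0)) {0..t}"
    proof (rule fundamental_theorem_of_calculus_interior[OF _ c])
      fix x assume x: "x \<in> {0<..<t}"
      have "(Dt has_real_derivative deriv D x) (at x)"
        using x that dD[of x] ev[of x] by (subst DERIV_cong_ev[OF refl _ refl]) auto
      then show "(Dt has_vector_derivative deriv D x) (at x)"
        by (simp add: has_real_derivative_iff_has_vector_derivative)
    qed (use that in auto)
    then show ?thesis using that by (simp add: Dt_def)
  qed
  define IL where "IL t = integral {0..t} (\<lambda>u. ln u * deriv D u)" for t
  have E1eq: "((\<lambda>u. - ln (u / c) * deriv D u) has_integral (- IL t + ln c * D t)) {0..t}"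
    if "0 < t" "t < 1" "0 < c" for t c
  proof (rule has_integral_spike[OF negligible_sing[of 0]])
    show "((\<lambda>u. - (ln u * deriv D u) + ln c * deriv D u) has_integral (- IL t + ln c * D t)) {0..t}"
      unfolding IL_def
      by (intro has_integral_add has_integral_neg has_integral_mult_right FTC that
          integrable_integral) (use assms(6) that in auto)
    fix x assume "x \<in> {0..t} - {0}"
    then show "- ln (x / c) * deriv D x = - (ln x * deriv D x) + ln c * deriv D x"
      using that by (auto simp: ln_div algebra_simps)
  qed
  have ILeq: "IL \<tau> = \<tau> * ln \<tau> - \<tau> + (D \<tau> - \<tau>) * (ln \<tau> - (2 - \<tau>) / (1 - \<tau>))"
  proof -
    have "((\<lambda>u. ln u * deriv D u - ln u) has_integral (IL \<tau> - (\<tau> * ln \<tau> - \<tau>))) {0..\<tau>}"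
      unfolding IL_def
      by (intro has_integral_diff integrable_integral ln_has_integral) (use assms(6) tau in auto)
    then have "integral {0..\<tau>} (\<lambda>u. ln u * (deriv D u - 1)) = IL \<tau> - (\<tau> * ln \<tau> - \<tau>)"
      by (simp add: algebra_simps integral_unique)
    then show ?thesis using assms(10) by simp
  qed
  have part2: "((\<lambda>t2. Bahadur_c D \<tau> t2) has_real_derivative 0) (at \<tau>)"
  proof -
    have ev: "eventually (\<lambda>t2. (- IL \<tau> + ln t2 * D \<tau> - E0 \<tau> t2)^2 / V0 \<tau> t2 = Bahadur_c D \<tau> t2) (nhds \<tau>)"
    proof -
      have "eventually (\<lambda>u. u \<in> {0<..}) (nhds \<tau>)"
        using tau by (intro eventually_nhds_in_open) auto
      then show ?thesis
      proof eventually_elim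
        case (elim t2)
        have "E1 D \<tau> t2 = - IL \<tau> + ln t2 * D \<tau>"
          unfolding E1_def using E1eq[of \<tau> t2] tau elim by (intro integral_unique) auto
        then show ?case by (simp add: Bahadur_c_def)
      qed
    qed
    have "((\<lambda>t2. (- IL \<tau> + ln t2 * D \<tau> - E0 \<tau> t2)^2 / V0 \<tau> t2) has_real_derivative 0) (at \<tau>)"
    proof -
      have P: "ln \<tau> * D \<tau> - IL \<tau> - \<tau> = (D \<tau> - \<tau>) * (2 - \<tau>) / (1 - \<tau>)"
        using tau unfolding ILeq by (simp add: field_simps)
      have a: "1 - \<tau> \<noteq> 0" "\<tau> \<noteq> 0" using tau by auto
      have "2 * ((D \<tau> / \<tau> - 1) * ((D \<tau> - \<tau>) * (2 - \<tau>))) * (\<tau> * (2 - \<tau>)) / (1 - \<tau>)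
          = 2 * (D \<tau> - \<tau>)^2 * (2 - \<tau>)^2 / (1 - \<tau>)"
        using a by (simp add: field_simps power2_eq_square)
      also have "\<dots> = ((D \<tau> - \<tau>) * (2 - \<tau>) / (1 - \<tau>))\<^sup>2 * (2 - 2 * \<tau>)"
      proof -
        have h: "(q / b)^2 * (2 * b) = 2 * q^2 / b" if "b \<noteq> 0" for q b :: real
          using that by (simp add: power2_eq_square field_simps)
        have e: "2 - 2 * \<tau> = 2 * (1 - \<tau>)" by simp
        show ?thesis unfolding e h[OF a(1)] power_mult_distrib by (simp add: mult.assoc)
      qed
      finally have key: "2 * ((D \<tau> / \<tau> - 1) * ((D \<tau> - \<tau>) * (2 - \<tau>))) * (\<tau> * (2 - \<tau>)) / (1 - \<tau>) =
            ((D \<tau> - \<tau>) * (2 - \<tau>) / (1 - \<tau>))\<^sup>2 * (2 - 2 * \<tau>)" .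
      show ?thesis
        using tau apply (auto intro!: derivative_eq_intros simp: E0_def V0_def)
        apply (simp add: P)
        by (rule key)
    qed
    then show ?thesis using DERIV_cong_ev[OF refl ev refl] by simp
  qed
  define a0 where "a0 = \<tau> / 4"
  define a where "a = \<tau> / 2"
  define b where "b = (1 + \<tau>) / 2"
  have ab: "0 < a0" "a0 < a" "a < \<tau>" "\<tau> < b" "b < 1" using tau by (auto simp: a0_def a_def b_def)
  have cM: "continuous_on {a0..b} (\<lambda>u. D u / u)"
    using ab by (intro continuous_at_imp_continuous_on ballI continuous_intros cD) auto
  define M where "M t = integral {a0..t} (\<lambda>u. D u / u)" for t
  have dM: "(M has_real_derivative D x / x) (at x)" if "a0 < x" "x < b" for x
    using integral_has_real_derivative[OF cM, of x] that unfolding M_def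
    by (simp add: at_within_Icc_at)
  define H where "H t = (ln t - ln \<tau>) * D t - M t" for t
  have dH: "(H has_real_derivative (ln x - ln \<tau>) * deriv D x) (at x)" if "a0 < x" "x < b" for x
    unfolding H_def using that ab
    by (auto intro!: derivative_eq_intros dD dM simp: field_simps)
  define g where "g u = - ln (u / \<tau>) * deriv D u" for u
  have Eloc: "E1 D t \<tau> = integral {0..a} g + (H a - H t)" if "a < t" "t < b" for t
  proof -
    have gint: "g integrable_on {0..t}"
      using E1eq[of t \<tau>] that ab tau unfolding g_def by (auto simp: integrable_on_def)
    have "((\<lambda>u. - ((ln u - ln \<tau>) * deriv D u)) has_integral (- H t - - H a)) {a..t}"
    proof (rule fundamental_theorem_of_calculus_interior)
      show "continuous_on {a..t} (\<lambda>u. - H u)"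
        using that ab
        by (intro continuous_at_imp_continuous_on ballI continuous_intros DERIV_isCont[OF dH]) auto
      fix x assume "x \<in> {a<..<t}"
      then have "((\<lambda>u. - H u) has_real_derivative - ((ln x - ln \<tau>) * deriv D x)) (at x)"
        using that ab by (auto intro!: derivative_eq_intros dH)
      then show "((\<lambda>u. - H u) has_vector_derivative - ((ln x - ln \<tau>) * deriv D x)) (at x)"
        by (simp add: has_real_derivative_iff_has_vector_derivative)
    qed (use that in auto)
    then have i2: "((\<lambda>u. - ((ln u - ln \<tau>) * deriv D u)) has_integral (H a - H t)) {a..t}"
      by simp
    have "(g has_integral (H a - H t)) {a..t}"
    proof (rule has_integral_spike[OF negligible_empty _ i2])
      fix x assume "x \<in> {a..t} - {}"
      then show "g x = - ((ln x - ln \<tau>) * deriv D x)"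
        using ab tau by (auto simp: g_def ln_div algebra_simps)
    qed
    moreover have "integral {0..a} g + integral {a..t} g = integral {0..t} g"
      using that ab gint by (intro Henstock_Kurzweil_Integration.integral_combine) auto
    ultimately show ?thesis
      unfolding E1_def g_def[symmetric] using integral_unique by metis
  qed
  have dE1: "((\<lambda>t. E1 D t \<tau>) has_real_derivative 0) (at \<tau>)"
  proof -
    have ev: "eventually (\<lambda>t. integral {0..a} g + (H a - H t) = E1 D t \<tau>) (nhds \<tau>)"
    proof -
      have "eventually (\<lambda>u. u \<in> {a<..<b}) (nhds \<tau>)"
        using ab by (intro eventually_nhds_in_open) auto
      then show ?thesis by eventually_elim (auto simp: Eloc)
    qed
    have "((\<lambda>t. integral {0..a} g + (H a - H t)) has_real_derivative 0) (at \<tau>)"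
      using ab dH[of \<tau>] by (auto intro!: derivative_eq_intros)
    then show ?thesis using DERIV_cong_ev[OF refl ev refl] by simp
  qed
  have part1: "((\<lambda>t1. Bahadur_c D t1 \<tau>) has_real_derivative 0) (at \<tau>)"
    unfolding Bahadur_c_def E0_def V0_def
    using tau by (auto intro!: derivative_eq_intros dE1 simp: field_simps)
  show ?thesis using part1 part2 by blast
qed

end
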